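(* Let $\mathsf G=(\mathsf V,\mathsf E)$ be a finite connected graph without loops or multiple edges, with discrete Laplacian $\mathcal L=\mathcal I\mathcal I^T$. Then there exists some $p\in(2,\infty)$ such that the semigroup $(e^{-t\mathcal L^2})_{t\ge0}$ is $\ell^p$-contractive, i.e. $\|e^{-t\mathcal L^2}f\|_{\ell^p(\mathsf V)}\le\|f\|_{\ell^p(\mathsf V)}$ for all $t\ge0$ and all $f$.
   Context: $V=|\mathsf V|$ and functions on the vertices are vectors in $\mathbb C^V$. After fixing an arbitrary orientation of the edges, the incidence matrix $\mathcal I\in\mathbb R^{V\times E}$ has entries $\iota_{\mathsf v\mathsf e}=-1$ if $\mathsf v$ is the initial endpoint of $\mathsf e$, $+1$ if $\mathsf v$ is the terminal endpoint of $\mathsf e$, and $0$ otherwise; $\mathcal L=\mathcal I\mathcal I^T$. *)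

theory Defs
  imports "HOL-Analysis.Analysis"
begin

text \<open>A graph is given by a set
  Ed of oriented edges (pairs (initial, terminal)); the orientation is arbitrary.\<close>

definition simple_oriented_graph :: "('v \<times> 'v) set \<Rightarrow> bool" where
  "simple_oriented_graph Ed \<longleftrightarrow>
     (\<forall>(a,b)\<in>Ed. a \<noteq> b) \<and> (\<forall>(a,b)\<in>Ed. (b,a) \<notin> Ed)"

definition adjacent :: "('v \<times> 'v) set \<Rightarrow> 'v \<Rightarrow> 'v \<Rightarrow> bool" where
  "adjacent Ed u w \<longleftrightarrow> (u,w) \<in> Ed \<or> (w,u) \<in> Ed"

definition connected_graph :: "('v \<times> 'v) set \<Rightarrow> bool" where
  "connected_graph Ed \<longleftrightarrow> (\<forall>u w. (adjacent Ed)\<^sup>*\<^sup>* u w)"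

definition incidence :: "('v \<times> 'v) set \<Rightarrow> 'v \<Rightarrow> ('v \<times> 'v) \<Rightarrow> real" where
  "incidence Ed v e = (if e \<in> Ed then (if v = fst e then -1 else if v = snd e then 1 else 0) else 0)"

definition laplacian :: "('v \<times> 'v) set \<Rightarrow> 'v \<Rightarrow> 'v \<Rightarrow> real" where
  "laplacian Ed u w = (\<Sum>e\<in>Ed. incidence Ed u e * incidence Ed w e)"

definition mat_mult :: "('v::finite \<Rightarrow> 'v \<Rightarrow> real) \<Rightarrow> ('v \<Rightarrow> 'v \<Rightarrow> real) \<Rightarrow> 'v \<Rightarrow> 'v \<Rightarrow> real" where
  "mat_mult A B i j = (\<Sum>k\<in>UNIV. A i k * B k j)"

definition mat_id :: "'v \<Rightarrow> 'v \<Rightarrow> real" where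
  "mat_id i j = (if i = j then 1 else 0)"

primrec mat_pow :: "('v::finite \<Rightarrow> 'v \<Rightarrow> real) \<Rightarrow> nat \<Rightarrow> 'v \<Rightarrow> 'v \<Rightarrow> real" where
  "mat_pow A 0 = mat_id"
| "mat_pow A (Suc n) = mat_mult A (mat_pow A n)"

definition mat_exp :: "('v::finite \<Rightarrow> 'v \<Rightarrow> real) \<Rightarrow> 'v \<Rightarrow> 'v \<Rightarrow> real" where
  "mat_exp A i j = (\<Sum>n. mat_pow A n i j / fact n)"

definition mat_scale :: "real \<Rightarrow> ('v \<Rightarrow> 'v \<Rightarrow> real) \<Rightarrow> 'v \<Rightarrow> 'v \<Rightarrow> real" where
  "mat_scale c A i j = c * A i j"

definition mat_apply :: "('v::finite \<Rightarrow> 'v \<Rightarrow> real) \<Rightarrow> ('v \<Rightarrow> complex) \<Rightarrow> 'v \<Rightarrow> complex" where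
  "mat_apply A f i = (\<Sum>j\<in>UNIV. complex_of_real (A i j) * f j)"

definition lp_norm :: "real \<Rightarrow> ('v::finite \<Rightarrow> complex) \<Rightarrow> real" where
  "lp_norm p f = (\<Sum>v\<in>UNIV. cmod (f v) powr p) powr (1 / p)"

end

theory Submission
  imports Defs
begin


lemma mat_pow_scale: "mat_pow (mat_scale c A) n = mat_scale (c^n) (mat_pow A n)"
proof (induction n)
  case 0 show ?case by (auto simp: mat_scale_def fun_eq_iff)
next
  case (Suc n)
  show ?case using Suc by (auto simp: mat_scale_def mat_mult_def fun_eq_iff sum_distrib_left mult_ac)
qed

definition ec :: "('v::finite \<Rightarrow> 'v \<Rightarrow> real) \<Rightarrow> 'v \<Rightarrow> 'v \<Rightarrow> nat \<Rightarrow> real" where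
  "ec A i j n = (-1)^n * mat_pow A n i j / fact n"

lemma mat_exp_series: "mat_exp (mat_scale (-t) A) i j = (\<Sum>n. ec A i j n * t^n)"
  unfolding mat_exp_def
proof (rule arg_cong[where f=suminf], rule ext)
  fix n
  have "(-t)^n = (-1)^n * t^n" by (rule power_minus)
  then show "mat_pow (mat_scale (- t) A) n i j / fact n = ec A i j n * t ^ n"
    unfolding mat_pow_scale ec_def mat_scale_def by simp
qed

lemma mat_pow_bound:
  fixes A :: "'v::finite \<Rightarrow> 'v \<Rightarrow> real"
  shows "\<bar>mat_pow A n i j\<bar> \<le> (\<Sum>a\<in>UNIV. \<Sum>b\<in>UNIV. \<bar>A a b\<bar>)^n"
proof (induction n arbitrary: i j)
  case 0 show ?case by (simp add: mat_id_def)
next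
  case (Suc n)
  let ?B = "(\<Sum>a\<in>UNIV. \<Sum>b\<in>UNIV. \<bar>A a b\<bar>)"
  have B0: "0 \<le> ?B" by (simp add: sum_nonneg)
  have "\<bar>mat_pow A (Suc n) i j\<bar> \<le> (\<Sum>k\<in>UNIV. \<bar>A i k\<bar> * \<bar>mat_pow A n k j\<bar>)"
    by (simp add: mat_mult_def) (metis (no_types, lifting) abs_mult sum.cong sum_abs)
  also have "\<dots> \<le> (\<Sum>k\<in>UNIV. \<bar>A i k\<bar> * ?B^n)"
    by (rule sum_mono) (simp add: Suc mult_left_mono)
  also have "\<dots> = (\<Sum>k\<in>UNIV. \<bar>A i k\<bar>) * ?B^n" by (simp add: sum_distrib_right)
  also have "\<dots> \<le> ?B * ?B^n"
  proof (rule mult_right_mono)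
    show "(\<Sum>k\<in>UNIV. \<bar>A i k\<bar>) \<le> ?B"
      using member_le_sum[of i UNIV "\<lambda>a. \<Sum>b\<in>UNIV. \<bar>A a b\<bar>"] by (simp add: sum_nonneg)
  qed (use B0 in simp)
  finally show ?case by simp
qed

lemma ec_summable:
  fixes A :: "'v::finite \<Rightarrow> 'v \<Rightarrow> real"
  shows "summable (\<lambda>n. ec A i j n * y^n)"
proof (rule summable_comparison_test'[where N=0])
  let ?B = "(\<Sum>a\<in>UNIV. \<Sum>b\<in>UNIV. \<bar>A a b\<bar>)"
  show "summable (\<lambda>n. inverse (fact n) * (?B * \<bar>y\<bar>)^n)" by (rule summable_exp)
  fix n :: nat
  have "norm (ec A i j n * y^n) = \<bar>mat_pow A n i j\<bar> * \<bar>y\<bar>^n / fact n"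
    by (simp add: ec_def abs_mult power_abs)
  also have "\<dots> \<le> ?B^n * \<bar>y\<bar>^n / fact n"
    by (intro divide_right_mono mult_right_mono mat_pow_bound) auto
  finally show "norm (ec A i j n * y^n) \<le> inverse (fact n) * (?B * \<bar>y\<bar>)^n"
    by (simp add: power_mult_distrib field_simps)
qed

lemma diffs_ec: "diffs (ec A i j) n = - (\<Sum>k\<in>UNIV. A i k * ec A k j n)"
  by (simp add: diffs_def ec_def mat_mult_def sum_distrib_left sum_divide_distrib
        sum_negf field_simps del: of_nat_Suc)

lemma mat_exp_deriv:
  fixes A :: "'v::finite \<Rightarrow> 'v \<Rightarrow> real"
  shows "((\<lambda>t. mat_exp (mat_scale (-t) A) i j) has_real_derivative
          - (\<Sum>k\<in>UNIV. A i k * mat_exp (mat_scale (-t) A) k j)) (at t)"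
proof -
  have "((\<lambda>t. \<Sum>n. ec A i j n * t^n) has_real_derivative (\<Sum>n. diffs (ec A i j) n * t^n)) (at t)"
    by (rule termdiffs_strong_converges_everywhere) (rule ec_summable)
  moreover have "(\<Sum>n. diffs (ec A i j) n * t^n) = - (\<Sum>k\<in>UNIV. A i k * mat_exp (mat_scale (-t) A) k j)"
  proof -
    have "(\<Sum>n. diffs (ec A i j) n * t^n) = (\<Sum>n. - (\<Sum>k\<in>UNIV. A i k * (ec A k j n * t^n)))"
      by (simp add: diffs_ec sum_distrib_right sum_distrib_left mult_ac)
    also have "\<dots> = - (\<Sum>n. (\<Sum>k\<in>UNIV. A i k * (ec A k j n * t^n)))"
      by (rule suminf_minus) (intro summable_sum summable_mult ec_summable)
    also have "\<dots> = - (\<Sum>k\<in>UNIV. (\<Sum>n. A i k * (ec A k j n * t^n)))"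
      by (subst suminf_sum) (auto intro: summable_mult ec_summable)
    also have "\<dots> = - (\<Sum>k\<in>UNIV. A i k * mat_exp (mat_scale (-t) A) k j)"
      by (simp add: mat_exp_series suminf_mult ec_summable)
    finally show ?thesis .
  qed
  ultimately show ?thesis by (simp add: mat_exp_series)
qed

lemma mat_exp_zero: "mat_exp (mat_scale (-0) A) i j = mat_id i j"
proof -
  have "mat_exp (mat_scale (-0) A) i j = (\<Sum>n. ec A i j n * 0^n)" by (rule mat_exp_series)
  also have "\<dots> = mat_id i j" by (subst powser_zero) (simp add: ec_def)
  finally show ?thesis .
qed



definition n2 :: "('v::finite \<Rightarrow> complex) \<Rightarrow> real" where
  "n2 g = (\<Sum>v\<in>UNIV. (cmod (g v))^2)"

definition ip :: "('v::finite \<Rightarrow> complex) \<Rightarrow> ('v \<Rightarrow> complex) \<Rightarrow> real" where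
  "ip x y = (\<Sum>v\<in>UNIV. Re (x v * cnj (y v)))"

lemma n2_nonneg: "0 \<le> n2 g" by (simp add: n2_def sum_nonneg)

lemma ip_CS: "(ip x y)^2 \<le> n2 x * n2 y"
proof -
  have pt: "\<bar>Re (x v * cnj (y v))\<bar> \<le> cmod (x v) * cmod (y v)" for v
  proof -
    have "\<bar>Re (x v * cnj (y v))\<bar> \<le> cmod (x v * cnj (y v))" by (rule abs_Re_le_cmod)
    also have "\<dots> = cmod (x v) * cmod (y v)" by (simp add: norm_mult)
    finally show ?thesis .
  qed
  have a: "\<bar>ip x y\<bar> \<le> (\<Sum>v\<in>UNIV. cmod (x v) * cmod (y v))"
    unfolding ip_def by (rule order_trans[OF sum_abs]) (rule sum_mono[OF pt])
  have b: "(\<Sum>v\<in>UNIV. cmod (x v) * cmod (y v))^2 \<le> n2 x * n2 y"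
    unfolding n2_def by (rule Cauchy_Schwarz_ineq_sum)
  have "(ip x y)^2 = \<bar>ip x y\<bar>^2" by simp
  also have "\<dots> \<le> (\<Sum>v\<in>UNIV. cmod (x v) * cmod (y v))^2"
    by (rule power_mono[OF a]) simp
  finally show ?thesis using b by linarith
qed

lemma ip_diff2: "ip x (\<lambda>v. y v - z v) = ip x y - ip x z"
  by (simp add: ip_def ring_distribs sum_subtractf)

lemma lap_sym:
  fixes Ed :: "('v::finite \<times> 'v) set"
  shows "laplacian Ed u w = laplacian Ed w u"
  by (simp add: laplacian_def mult.commute)

lemma incidence_sum:
  fixes Ed :: "('v::finite \<times> 'v) set"
 
  assumes "simple_oriented_graph Ed"
  shows "(\<Sum>u\<in>UNIV. incidence Ed u e) = 0"
proof (cases "e \<in> Ed")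
  case True
  obtain a b where e: "e = (a,b)" by fastforce
  with True assms have ab: "a \<noteq> b" by (auto simp: simple_oriented_graph_def)
  have "(\<Sum>u\<in>UNIV. incidence Ed u e) = (\<Sum>u\<in>UNIV. (if u = b then 1 else 0) - (if u = a then 1 else 0))"
    using True ab e by (intro sum.cong) (auto simp: incidence_def)
  also have "\<dots> = 0"
  proof -
    have "(\<Sum>u\<in>UNIV. (if u = b then 1 else 0)::real) = 1" by simp
    moreover have "(\<Sum>u\<in>UNIV. (if u = a then 1 else 0)::real) = 1" by simp
    ultimately show ?thesis by (simp add: sum_subtractf)
  qed
  finally show ?thesis .
qed (simp add: incidence_def)

lemma lap_rowsum:
  fixes Ed :: "('v::finite \<times> 'v) set"
 
  assumes "simple_oriented_graph Ed"
  shows "(\<Sum>u\<in>UNIV. laplacian Ed v u) = 0"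
proof -
  have "(\<Sum>u\<in>UNIV. laplacian Ed v u) = (\<Sum>e\<in>Ed. incidence Ed v e * (\<Sum>u\<in>UNIV. incidence Ed u e))"
    unfolding laplacian_def by (simp add: sum_distrib_left) (rule sum.swap)
  also have "\<dots> = 0" using incidence_sum[OF assms] by simp
  finally show ?thesis .
qed

lemma lap_colsum:
  fixes Ed :: "('v::finite \<times> 'v) set"
 
  assumes "simple_oriented_graph Ed"
  shows "(\<Sum>v\<in>UNIV. laplacian Ed v u) = 0"
  using lap_rowsum[OF assms, of u] by (simp add: lap_sym)

definition Dg :: "('v \<times> 'v) set \<Rightarrow> ('v::finite \<Rightarrow> complex) \<Rightarrow> 'v \<times> 'v \<Rightarrow> complex" where
  "Dg Ed g e = (\<Sum>u\<in>UNIV. complex_of_real (incidence Ed u e) * g u)"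

lemma Dg_edge:
  assumes "simple_oriented_graph Ed" "(a,b) \<in> Ed"
  shows "Dg Ed g (a,b) = g b - g a"
proof -
  from assms have ab: "a \<noteq> b" by (auto simp: simple_oriented_graph_def)
  have "Dg Ed g (a,b) = (\<Sum>u\<in>UNIV. (if u = b then g u else 0) - (if u = a then g u else 0))"
    unfolding Dg_def using assms(2) ab by (intro sum.cong) (auto simp: incidence_def)
  also have "\<dots> = g b - g a" by (simp add: sum_subtractf sum.delta)
  finally show ?thesis .
qed

lemma lap_apply_Dg:
  fixes Ed :: "('v::finite \<times> 'v) set"
  shows "mat_apply (laplacian Ed) g v = (\<Sum>e\<in>Ed. complex_of_real (incidence Ed v e) * Dg Ed g e)"
proof -
  have "mat_apply (laplacian Ed) g v =
     (\<Sum>u\<in>UNIV. \<Sum>e\<in>Ed. complex_of_real (incidence Ed v e) * (complex_of_real (incidence Ed u e) * g u))"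
    unfolding mat_apply_def laplacian_def by (simp add: of_real_sum sum_distrib_right sum_distrib_left mult_ac)
  also have "\<dots> = (\<Sum>e\<in>Ed. complex_of_real (incidence Ed v e) * Dg Ed g e)"
    by (subst sum.swap) (simp add: Dg_def sum_distrib_left)
  finally show ?thesis .
qed

lemma quad_form:
  fixes Ed :: "('v::finite \<times> 'v) set"
  shows "ip (mat_apply (laplacian Ed) g) g = (\<Sum>e\<in>Ed. (cmod (Dg Ed g e))^2)"
proof -
  let ?c = "\<lambda>v e. complex_of_real (incidence Ed v e)"
  have "(\<Sum>v\<in>UNIV. mat_apply (laplacian Ed) g v * cnj (g v))
      = (\<Sum>v\<in>UNIV. \<Sum>e\<in>Ed. Dg Ed g e * (?c v e * cnj (g v)))"
    unfolding lap_apply_Dg by (simp add: sum_distrib_right sum_distrib_left mult_ac)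
  also have "\<dots> = (\<Sum>e\<in>Ed. \<Sum>v\<in>UNIV. Dg Ed g e * (?c v e * cnj (g v)))"
    by (rule sum.swap)
  also have "\<dots> = (\<Sum>e\<in>Ed. Dg Ed g e * (\<Sum>v\<in>UNIV. ?c v e * cnj (g v)))"
    by (simp add: sum_distrib_left)
  also have "\<dots> = (\<Sum>e\<in>Ed. Dg Ed g e * cnj (Dg Ed g e))"
    by (simp add: Dg_def cnj_sum)
  also have "\<dots> = (\<Sum>e\<in>Ed. complex_of_real ((cmod (Dg Ed g e))^2))"
    by (simp only: complex_norm_square)
  finally have "(\<Sum>v\<in>UNIV. mat_apply (laplacian Ed) g v * cnj (g v)) = complex_of_real (\<Sum>e\<in>Ed. (cmod (Dg Ed g e))^2)"
    by (simp add: of_real_sum)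
  then show ?thesis unfolding ip_def by (metis Re_complex_of_real Re_sum)
qed

lemma ip_lap_const:
  fixes Ed :: "('v::finite \<times> 'v) set"
  assumes "simple_oriented_graph Ed"
  shows "ip (mat_apply (laplacian Ed) g) (\<lambda>v. c) = 0"
proof -
  have "(\<Sum>v\<in>UNIV. mat_apply (laplacian Ed) g v) = (\<Sum>u\<in>UNIV. complex_of_real (\<Sum>v\<in>UNIV. laplacian Ed v u) * g u)"
    unfolding mat_apply_def by (subst sum.swap) (simp add: of_real_sum sum_distrib_right)
  also have "\<dots> = 0" using lap_colsum[OF assms] by simp
  finally have "(\<Sum>v\<in>UNIV. mat_apply (laplacian Ed) g v) = 0" .
  then have "(\<Sum>v\<in>UNIV. mat_apply (laplacian Ed) g v * cnj c) = 0"
    by (simp flip: sum_distrib_right)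
  moreover have "ip (mat_apply (laplacian Ed) g) (\<lambda>v. c) = Re (\<Sum>v\<in>UNIV. mat_apply (laplacian Ed) g v * cnj c)"
    unfolding ip_def by (simp only: Re_sum)
  ultimately show ?thesis by simp
qed

lemma quad_nonneg:
  fixes Ed :: "('v::finite \<times> 'v) set"
  shows "0 \<le> ip (mat_apply (laplacian Ed) g) g"
  by (simp add: quad_form sum_nonneg)

lemma edge_le:
  fixes Ed :: "('v::finite \<times> 'v) set"
  assumes "simple_oriented_graph Ed" "adjacent Ed x w"
  shows "cmod (g x - g w) \<le> sqrt (ip (mat_apply (laplacian Ed) g) g)"
proof -
  have key: "(cmod (g b - g a))^2 \<le> ip (mat_apply (laplacian Ed) g) g" if "(a,b) \<in> Ed" for a b
  proof -
    have "(cmod (g b - g a))^2 = (cmod (Dg Ed g (a,b)))^2" using Dg_edge[OF assms(1) that] by simp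
    also have "\<dots> \<le> (\<Sum>e\<in>Ed. (cmod (Dg Ed g e))^2)"
      by (rule member_le_sum) (use that in auto)
    finally show ?thesis by (simp add: quad_form)
  qed
  from assms(2) have "(cmod (g x - g w))^2 \<le> ip (mat_apply (laplacian Ed) g) g"
    unfolding adjacent_def using key[of x w] key[of w x] by (auto simp: norm_minus_commute)
  then show ?thesis by (metis norm_ge_zero real_le_rsqrt)
qed

lemma path_le:
  fixes Ed :: "('v::finite \<times> 'v) set"
  assumes "simple_oriented_graph Ed" "connected_graph Ed"
  shows "cmod (g u - g w) \<le> real (card {(x,y). adjacent Ed x y}) * sqrt (ip (mat_apply (laplacian Ed) g) g)"
proof -
  let ?R = "{(x,y). adjacent Ed x y}"
  let ?s = "sqrt (ip (mat_apply (laplacian Ed) g) g)"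
  have s0: "0 \<le> ?s" using quad_nonneg[of Ed g] by simp
  have rel: "(u,w) \<in> ?R ^^ n \<Longrightarrow> cmod (g u - g w) \<le> real n * ?s" for n u w
  proof (induction n arbitrary: w)
    case 0 then show ?case by simp
  next
    case (Suc n)
    then obtain x where ux: "(u,x) \<in> ?R ^^ n" and xw: "adjacent Ed x w" by auto
    have "cmod (g u - g w) \<le> cmod (g u - g x) + cmod (g x - g w)" by (rule norm_diff_triangle_le) auto
    also have "\<dots> \<le> real n * ?s + ?s" using Suc.IH[OF ux] edge_le[OF assms(1) xw, of g] by simp
    finally show ?case by (simp add: algebra_simps)
  qed
  have "(adjacent Ed)\<^sup>*\<^sup>* u w" using assms(2) unfolding connected_graph_def by blast
  then have "(u,w) \<in> ?R^*" by (simp add: rtranclp_rtrancl_eq)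
  then obtain n where n: "n \<le> card ?R" "(u,w) \<in> ?R ^^ n"
    using rtrancl_finite_eq_relpow[of ?R] by auto
  have "cmod (g u - g w) \<le> real n * ?s" by (rule rel[OF n(2)])
  also have "\<dots> \<le> real (card ?R) * ?s" using n(1) s0 by (intro mult_right_mono) auto
  finally show ?thesis .
qed

lemma gap:
  fixes Ed :: "('v::finite \<times> 'v) set"
  assumes "simple_oriented_graph Ed" "connected_graph Ed"
  defines "C \<equiv> real CARD('v) * (real (card {(x,y). adjacent Ed x y}))^2"
  shows "n2 (\<lambda>v. g v - g w) \<le> C^2 * n2 (mat_apply (laplacian Ed) g)"
proof -
  let ?Q = "ip (mat_apply (laplacian Ed) g) g"
  let ?N = "real (card {(x,y). adjacent Ed x y})"
  let ?X = "n2 (\<lambda>v. g v - g w)"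
  let ?Y = "n2 (mat_apply (laplacian Ed) g)"
  have Q0: "0 \<le> ?Q" by (rule quad_nonneg)
  have "?X \<le> (\<Sum>v\<in>(UNIV::'v set). (?N * sqrt ?Q)^2)"
    unfolding n2_def by (rule sum_mono, rule power_mono[OF path_le[OF assms(1,2)]]) auto
  also have "\<dots> = C * ?Q" using Q0 by (simp add: C_def power_mult_distrib)
  finally have X1: "?X \<le> C * ?Q" .
  have "?Q = ip (mat_apply (laplacian Ed) g) (\<lambda>v. g v - g w)"
    by (simp add: ip_diff2 ip_lap_const[OF assms(1)])
  then have "?Q^2 \<le> ?Y * ?X" using ip_CS by metis
  have C0: "0 \<le> C" by (simp add: C_def)
  have X0: "0 \<le> ?X" by (rule n2_nonneg)
  have "?X^2 \<le> (C * ?Q)^2" using X1 X0 by (intro power_mono) auto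
  also have "\<dots> = C^2 * ?Q^2" by (simp add: power_mult_distrib)
  also have "\<dots> \<le> C^2 * (?Y * ?X)" using \<open>?Q^2 \<le> ?Y * ?X\<close> by (intro mult_left_mono) auto
  finally have XX: "?X * ?X \<le> (C^2 * ?Y) * ?X" by (simp add: power2_eq_square mult_ac)
  show ?thesis
  proof (cases "?X = 0")
    case True then show ?thesis using n2_nonneg[of "mat_apply (laplacian Ed) g"] by simp
  next
    case False then have "?X > 0" using X0 by simp
    with XX show ?thesis by simp
  qed
qed



lemma pointwise_powr:
  fixes s R q :: real
  assumes s0: "0 \<le> s" and sR: "s \<le> R" and q0: "0 < q"
  shows "s * (R powr q - s powr q) \<le> q * R powr q * (R - s)"
proof (cases "s = 0")
  case True then show ?thesis using sR q0 by simp
next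
  case False
  then have sp: "0 < s" using s0 by simp
  then have Rp: "0 < R" using sR by simp
  define x where "x = s / R"
  have xp: "0 < x" and x1: "x \<le> 1" using sp Rp sR by (auto simp: x_def)
  have sx: "s = R * x" using Rp by (simp add: x_def)
  have spq: "s powr q = R powr q * x powr q" using Rp xp by (simp add: sx powr_mult)
  have e1: "1 - x powr q \<le> q * (- ln x)"
  proof -
    have "x powr q = exp (q * ln x)" using xp by (simp add: powr_def)
    moreover have "1 + q * ln x \<le> exp (q * ln x)" by (rule exp_ge_add_one_self)
    ultimately show ?thesis by linarith
  qed
  have e2: "x * (- ln x) \<le> 1 - x"
  proof -
    have "ln (1/x) \<le> 1/x - 1" using xp by (intro ln_le_minus_one) simp
    then have "- ln x \<le> 1/x - 1" using xp by (simp add: ln_div)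
    then have "x * (- ln x) \<le> x * (1/x - 1)" using xp by (intro mult_left_mono) auto
    also have "\<dots> = 1 - x" using xp by (simp add: field_simps)
    finally show ?thesis .
  qed
  have "x * (1 - x powr q) \<le> x * (q * (- ln x))" using e1 xp by (intro mult_left_mono) auto
  also have "\<dots> = q * (x * (- ln x))" by simp
  also have "\<dots> \<le> q * (1 - x)" using e2 q0 by (intro mult_left_mono) auto
  finally have key: "x * (1 - x powr q) \<le> q * (1 - x)" .
  have Rq: "0 \<le> R * R powr q" using Rp by simp
  have "s * (R powr q - s powr q) = (R * R powr q) * (x * (1 - x powr q))"
    unfolding spq by (simp add: sx algebra_simps)
  also have "\<dots> \<le> (R * R powr q) * (q * (1 - x))" using key Rq by (intro mult_left_mono) auto
  also have "\<dots> = q * R powr q * (R - s)" by (simp add: sx algebra_simps)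
  finally show ?thesis .
qed

lemma mat_apply_add: "mat_apply A (\<lambda>v. x v + y v) u = mat_apply A x u + mat_apply A y u"
  by (simp add: mat_apply_def ring_distribs sum.distrib)

lemma mat_apply_scale: "mat_apply A (\<lambda>v. complex_of_real a * x v) u = complex_of_real a * mat_apply A x u"
  by (simp add: mat_apply_def sum_distrib_left mult_ac)

lemma ip_add1: "ip (\<lambda>v. x v + y v) z = ip x z + ip y z"
  by (simp add: ip_def ring_distribs sum.distrib)

lemma ip_scale1: "ip (\<lambda>v. complex_of_real a * x v) z = a * ip x z"
  by (simp add: ip_def sum_distrib_left mult.assoc)

lemma ip_self: "ip x x = n2 x"
  by (simp add: ip_def n2_def complex_mult_cnj cmod_power2)

lemma ip_abs: "\<bar>ip x y\<bar> \<le> sqrt (n2 x * n2 y)"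
  using ip_CS[of x y] by (metis real_sqrt_abs real_sqrt_le_mono)

lemma mat_apply_bound:
  fixes A :: "'v::finite \<Rightarrow> 'v \<Rightarrow> real"
  shows "n2 (mat_apply A h) \<le> (\<Sum>v\<in>UNIV. \<Sum>u\<in>UNIV. (A v u)^2) * n2 h"
proof -
  have pt: "(cmod (mat_apply A h v))^2 \<le> (\<Sum>u\<in>UNIV. (A v u)^2) * n2 h" for v
  proof -
    have a: "cmod (mat_apply A h v) \<le> (\<Sum>u\<in>UNIV. \<bar>A v u\<bar> * cmod (h u))"
      unfolding mat_apply_def by (rule order_trans[OF norm_sum]) (simp add: norm_mult)
    have b: "(\<Sum>u\<in>UNIV. \<bar>A v u\<bar> * cmod (h u))^2 \<le> (\<Sum>u\<in>UNIV. \<bar>A v u\<bar>^2) * (\<Sum>u\<in>UNIV. (cmod (h u))^2)"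
      by (rule Cauchy_Schwarz_ineq_sum)
    have "(cmod (mat_apply A h v))^2 \<le> (\<Sum>u\<in>UNIV. \<bar>A v u\<bar> * cmod (h u))^2"
      by (rule power_mono[OF a]) simp
    with b show ?thesis by (simp add: n2_def)
  qed
  have "n2 (mat_apply A h) \<le> (\<Sum>v\<in>UNIV. (\<Sum>u\<in>UNIV. (A v u)^2) * n2 h)"
    unfolding n2_def[of "mat_apply A h"] by (rule sum_mono[OF pt])
  also have "\<dots> = (\<Sum>v\<in>UNIV. \<Sum>u\<in>UNIV. (A v u)^2) * n2 h" by (simp add: sum_distrib_right)
  finally show ?thesis .
qed



lemma core:
  fixes Ed :: "('v::finite \<times> 'v) set"
  assumes simple: "simple_oriented_graph Ed" and conn: "connected_graph Ed"
  defines "C \<equiv> real CARD('v) * (real (card {(x,y). adjacent Ed x y}))^2"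
    and "M2 \<equiv> (\<Sum>v\<in>UNIV. \<Sum>u\<in>UNIV. (laplacian Ed v u)^2)"
  assumes q0: "0 < q" and qS: "q * sqrt (M2 * C^2) \<le> 1"
  shows "0 \<le> ip (mat_apply (laplacian Ed) (\<lambda>v. complex_of_real (cmod (g v) powr q) * g v))
                 (mat_apply (laplacian Ed) g)"
proof -
  let ?L = "laplacian Ed"
  let ?Lg = "mat_apply ?L g"
  have M0: "0 \<le> M2" unfolding M2_def by (simp add: sum_nonneg)
  have S0: "0 \<le> sqrt (M2 * C^2)" using M0 by simp
  define R where "R = Max (range (\<lambda>v. cmod (g v)))"
  have "R \<in> range (\<lambda>v. cmod (g v))" unfolding R_def by (rule Max_in) auto
  then obtain w where w: "cmod (g w) = R" by auto
  have le_R: "cmod (g v) \<le> R" for v unfolding R_def by (rule Max_ge) auto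
  define a where "a = R powr q"
  have a0: "0 \<le> a" by (simp add: a_def)
  define \<rho> where "\<rho> = (\<lambda>v. complex_of_real (cmod (g v) powr q - a) * g v)"
  have phi: "(\<lambda>v. complex_of_real (cmod (g v) powr q) * g v) = (\<lambda>v. complex_of_real a * g v + \<rho> v)"
    by (rule ext) (simp add: \<rho>_def algebra_simps)
  have Lphi: "mat_apply ?L (\<lambda>v. complex_of_real a * g v + \<rho> v) = (\<lambda>u. complex_of_real a * ?Lg u + mat_apply ?L \<rho> u)"
    by (rule ext) (simp add: mat_apply_add mat_apply_scale)
  have F: "ip (mat_apply ?L (\<lambda>v. complex_of_real (cmod (g v) powr q) * g v)) ?Lg
      = a * n2 ?Lg + ip (mat_apply ?L \<rho>) ?Lg"
    unfolding phi Lphi by (simp add: ip_add1 ip_scale1 ip_self)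
  have rho_pt: "cmod (\<rho> v) \<le> q * a * cmod (g v - g w)" for v
  proof -
    let ?s = "cmod (g v)"
    have sq: "?s powr q \<le> a" unfolding a_def by (rule powr_mono2) (use q0 le_R in auto)
    have "cmod (\<rho> v) = (a - ?s powr q) * ?s" using sq by (simp add: \<rho>_def norm_mult flip: of_real_diff)
    also have "\<dots> = ?s * (R powr q - ?s powr q)" by (simp add: a_def)
    also have "\<dots> \<le> q * R powr q * (R - ?s)" by (rule pointwise_powr) (use le_R q0 in auto)
    also have "\<dots> \<le> q * a * cmod (g v - g w)"
    proof -
      have "R - ?s \<le> cmod (g w - g v)" using w norm_triangle_ineq2[of "g w" "g v"] by simp
      then show ?thesis unfolding a_def using q0
        by (intro mult_left_mono) (auto simp: norm_minus_commute)
    qed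
    finally show ?thesis .
  qed
  have n2rho: "n2 \<rho> \<le> (q * a)^2 * n2 (\<lambda>v. g v - g w)"
  proof -
    have "n2 \<rho> \<le> (\<Sum>v\<in>UNIV. (q * a * cmod (g v - g w))^2)"
      unfolding n2_def by (rule sum_mono, rule power_mono[OF rho_pt]) simp
    also have "\<dots> = (q * a)^2 * n2 (\<lambda>v. g v - g w)"
      by (simp add: n2_def sum_distrib_left power_mult_distrib)
    finally show ?thesis .
  qed
  have gp: "n2 (\<lambda>v. g v - g w) \<le> C^2 * n2 ?Lg"
    unfolding C_def by (rule gap[OF simple conn])
  have Y0: "0 \<le> n2 ?Lg" by (rule n2_nonneg)
  have "n2 (mat_apply ?L \<rho>) \<le> M2 * n2 \<rho>" unfolding M2_def by (rule mat_apply_bound)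
  also have "\<dots> \<le> M2 * ((q * a)^2 * (C^2 * n2 ?Lg))"
    using n2rho gp M0 by (intro mult_left_mono order_trans[OF n2rho] mult_left_mono) auto
  finally have b1: "n2 (mat_apply ?L \<rho>) \<le> M2 * ((q * a)^2 * (C^2 * n2 ?Lg))" .
  have "\<bar>ip (mat_apply ?L \<rho>) ?Lg\<bar> \<le> sqrt (n2 (mat_apply ?L \<rho>) * n2 ?Lg)" by (rule ip_abs)
  also have "\<dots> \<le> sqrt (M2 * ((q * a)^2 * (C^2 * n2 ?Lg)) * n2 ?Lg)"
    using b1 Y0 by (intro real_sqrt_le_mono mult_right_mono) auto
  also have "\<dots> = sqrt (M2 * C^2) * (q * a) * n2 ?Lg"
  proof -
    have "M2 * ((q * a)^2 * (C^2 * n2 ?Lg)) * n2 ?Lg = (M2 * C^2) * ((q * a) * n2 ?Lg)^2"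
      by (simp add: power_mult_distrib power2_eq_square)
    then show ?thesis using q0 a0 Y0 by (simp add: real_sqrt_mult)
  qed
  also have "\<dots> = (q * sqrt (M2 * C^2)) * (a * n2 ?Lg)" by simp
  also have "\<dots> \<le> 1 * (a * n2 ?Lg)" using qS a0 Y0 by (intro mult_right_mono) auto
  finally have "\<bar>ip (mat_apply ?L \<rho>) ?Lg\<bar> \<le> a * n2 ?Lg" by simp
  then show ?thesis unfolding F by linarith
qed



lemma absp_deriv0:
  fixes r :: real
  assumes r: "1 < r"
  shows "((\<lambda>s. \<bar>s\<bar> powr r) has_real_derivative 0) (at 0)"
proof -
  have "((\<lambda>y. \<bar>y\<bar> powr r / y) \<longlongrightarrow> 0) (at (0::real))"
  proof (rule Lim_null_comparison)
    show "\<forall>\<^sub>F y in at (0::real). norm (\<bar>y\<bar> powr r / y) \<le> \<bar>y\<bar> powr (r - 1)"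
    proof (rule eventually_mono)
      show "\<forall>\<^sub>F y in at (0::real). y \<noteq> 0" by (simp add: eventually_at_filter)
      fix y :: real assume y: "y \<noteq> 0"
      have "norm (\<bar>y\<bar> powr r / y) = \<bar>y\<bar> powr r / \<bar>y\<bar>" by simp
      also have "\<dots> = \<bar>y\<bar> powr (r - 1)" using y by (simp add: powr_diff)
      finally show "norm (\<bar>y\<bar> powr r / y) \<le> \<bar>y\<bar> powr (r - 1)" by simp
    qed
    show "((\<lambda>y. \<bar>y\<bar> powr (r - 1)) \<longlongrightarrow> 0) (at (0::real))"
      by (rule tendsto_zero_powrI) (use r in \<open>auto intro!: tendsto_eq_intros\<close>)
  qed
  then show ?thesis by (simp add: has_field_derivative_iff)
qed

lemma absp_deriv:
  fixes r :: real
  assumes r: "1 < r"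
  shows "((\<lambda>s. \<bar>s\<bar> powr r) has_real_derivative (r * s * \<bar>s\<bar> powr (r - 2))) (at s)"
proof (cases "s = 0")
  case True then show ?thesis using absp_deriv0[OF r] by simp
next
  case False
  have pw: "\<bar>s\<bar> * \<bar>s\<bar> powr (r - 2) = \<bar>s\<bar> powr (r - 1)"
  proof -
    have "\<bar>s\<bar> * \<bar>s\<bar> powr (r - 2) = \<bar>s\<bar> powr 1 * \<bar>s\<bar> powr (r - 2)" using False by simp
    also have "\<dots> = \<bar>s\<bar> powr (r - 1)" by (subst powr_add[symmetric]) simp
    finally show ?thesis .
  qed
  show ?thesis
  proof (cases "s > 0")
    case True
    have ev: "\<forall>\<^sub>F x in nhds s. \<bar>x\<bar> powr r = x powr r"
      using eventually_nhds_in_open[of "{0<..}" s] True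
      by (auto elim!: eventually_mono)
    have "((\<lambda>x. x powr r) has_real_derivative r * s powr (r - 1)) (at s)"
      by (rule has_real_derivative_powr) (use True in simp)
    then have "((\<lambda>x. \<bar>x\<bar> powr r) has_real_derivative r * s powr (r - 1)) (at s)"
      by (subst DERIV_cong_ev[OF refl ev refl])
    moreover have "r * s * \<bar>s\<bar> powr (r - 2) = r * s powr (r - 1)" using True pw
      by (simp add: mult.assoc)
    ultimately show ?thesis by metis
  next
    case False2: False
    then have neg: "s < 0" using False by simp
    have ev: "\<forall>\<^sub>F x in nhds s. \<bar>x\<bar> powr r = (- x) powr r"
      using eventually_nhds_in_open[of "{..<0}" s] neg
      by (auto elim!: eventually_mono)
    have "((\<lambda>x. (- x) powr r) has_real_derivative r * (- s) powr (r - 1) * (- 1)) (at s)"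
      by (rule DERIV_chain2[where f="\<lambda>x. x powr r" and g="\<lambda>x. - x", OF has_real_derivative_powr])
         (use neg in \<open>auto intro!: derivative_eq_intros\<close>)
    then have "((\<lambda>x. \<bar>x\<bar> powr r) has_real_derivative r * (- s) powr (r - 1) * (- 1)) (at s)"
      by (subst DERIV_cong_ev[OF refl ev refl])
    moreover have "r * s * \<bar>s\<bar> powr (r - 2) = r * (- s) powr (r - 1) * (- 1)"
    proof -
      have "r * s * \<bar>s\<bar> powr (r - 2) = - r * (\<bar>s\<bar> * \<bar>s\<bar> powr (r - 2))" using neg by simp
      also have "\<dots> = r * (- s) powr (r - 1) * (- 1)" using pw neg by simp
      finally show ?thesis .
    qed
    ultimately show ?thesis by metis
  qed
qed

lemma mat_apply_mult: "mat_apply (mat_mult A B) f v = mat_apply A (mat_apply B f) v"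
proof -
  have "mat_apply (mat_mult A B) f v = (\<Sum>j\<in>UNIV. \<Sum>k\<in>UNIV. complex_of_real (A v k) * (complex_of_real (B k j) * f j))"
    unfolding mat_apply_def mat_mult_def by (simp add: of_real_sum sum_distrib_right sum_distrib_left mult_ac)
  also have "\<dots> = mat_apply A (mat_apply B f) v"
    unfolding mat_apply_def by (subst sum.swap) (simp add: sum_distrib_left)
  finally show ?thesis .
qed

lemma mat_apply_id: "mat_apply mat_id f = f"
proof (rule ext)
  fix x
  have "mat_apply mat_id f x = (\<Sum>j\<in>UNIV. if j = x then f j else 0)"
    unfolding mat_apply_def by (rule sum.cong) (auto simp: mat_id_def)
  then show "mat_apply mat_id f x = f x" by simp
qed

lemma Re_mat_apply: "Re (mat_apply A f v) = (\<Sum>j\<in>UNIV. A v j * Re (f j))"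
  by (simp add: mat_apply_def Re_sum)

lemma Im_mat_apply: "Im (mat_apply A f v) = (\<Sum>j\<in>UNIV. A v j * Im (f j))"
  by (simp add: mat_apply_def Im_sum)

lemma comp_deriv:
  fixes A :: "'v::finite \<Rightarrow> 'v \<Rightarrow> real"
  shows "((\<lambda>t. \<Sum>j\<in>UNIV. mat_exp (mat_scale (-t) A) v j * r j) has_real_derivative
          - (\<Sum>k\<in>UNIV. A v k * (\<Sum>j\<in>UNIV. mat_exp (mat_scale (-t) A) k j * r j))) (at t)"
proof -
  have "((\<lambda>t. \<Sum>j\<in>UNIV. mat_exp (mat_scale (-t) A) v j * r j) has_real_derivative
          (\<Sum>j\<in>UNIV. - (\<Sum>k\<in>UNIV. A v k * mat_exp (mat_scale (-t) A) k j) * r j)) (at t)"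
    by (intro DERIV_sum DERIV_cmult_right mat_exp_deriv)
  moreover have "(\<Sum>j\<in>UNIV. - (\<Sum>k\<in>UNIV. A v k * mat_exp (mat_scale (-t) A) k j) * r j)
     = - (\<Sum>k\<in>UNIV. A v k * (\<Sum>j\<in>UNIV. mat_exp (mat_scale (-t) A) k j * r j))"
    by (simp add: sum_distrib_left sum_distrib_right sum_negf mult_ac) (rule sum.swap)
  ultimately show ?thesis by simp
qed

lemma ip_identity:
  fixes L :: "'v::finite \<Rightarrow> 'v \<Rightarrow> real"
  assumes sym: "\<And>u v. L u v = L v u"
  shows "(\<Sum>v\<in>UNIV. c v * Re (mat_apply (mat_mult L L) G v * cnj (G v)))
       = ip (mat_apply L (\<lambda>v. complex_of_real (c v) * G v)) (mat_apply L G)"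
proof -
  have "(\<Sum>u\<in>UNIV. mat_apply L (\<lambda>v. complex_of_real (c v) * G v) u * cnj (mat_apply L G u))
      = (\<Sum>u\<in>UNIV. \<Sum>v\<in>UNIV. complex_of_real (c v) * G v * (complex_of_real (L u v) * cnj (mat_apply L G u)))"
    unfolding mat_apply_def[of L "\<lambda>v. complex_of_real (c v) * G v"]
    by (simp add: sum_distrib_right sum_distrib_left mult_ac)
  also have "\<dots> = (\<Sum>v\<in>UNIV. \<Sum>u\<in>UNIV. complex_of_real (c v) * G v * (complex_of_real (L u v) * cnj (mat_apply L G u)))"
    by (rule sum.swap)
  also have "\<dots> = (\<Sum>v\<in>UNIV. complex_of_real (c v) * G v * cnj (mat_apply L (mat_apply L G) v))"
    unfolding mat_apply_def[of L "mat_apply L G"]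
    by (simp add: sum_distrib_left cnj_sum sym)
  also have "\<dots> = (\<Sum>v\<in>UNIV. complex_of_real (c v) * G v * cnj (mat_apply (mat_mult L L) G v))"
    by (simp add: mat_apply_mult)
  finally have eq: "(\<Sum>u\<in>UNIV. mat_apply L (\<lambda>v. complex_of_real (c v) * G v) u * cnj (mat_apply L G u))
      = (\<Sum>v\<in>UNIV. complex_of_real (c v) * G v * cnj (mat_apply (mat_mult L L) G v))" .
  have "ip (mat_apply L (\<lambda>v. complex_of_real (c v) * G v)) (mat_apply L G)
      = Re (\<Sum>v\<in>UNIV. complex_of_real (c v) * G v * cnj (mat_apply (mat_mult L L) G v))"
    unfolding ip_def by (simp only: Re_sum[symmetric] eq)
  also have "\<dots> = (\<Sum>v\<in>UNIV. c v * Re (mat_apply (mat_mult L L) G v * cnj (G v)))"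
    by (simp add: Re_sum mult_ac ring_distribs)
  finally show ?thesis by simp
qed

lemma cmod_pow_conv:
  fixes z :: complex and q :: real
  assumes "0 < q"
  shows "(cmod z)^2 * \<bar>(cmod z)^2\<bar> powr (q/2 - 1) = cmod z powr q"
proof (cases "z = 0")
  case True then show ?thesis using assms by simp
next
  case False
  let ?m = "cmod z"
  have m: "0 < ?m" using False by simp
  have "(?m^2) powr (q/2 - 1) = ?m powr (q - 2)"
    using powr_powr[of ?m 2 "q/2-1"] m by (simp add: algebra_simps)
  then have "?m^2 * \<bar>?m^2\<bar> powr (q/2 - 1) = ?m powr 2 * ?m powr (q - 2)" using m by simp
  also have "\<dots> = ?m powr (2 + (q - 2))" by (simp only: powr_add)
  also have "\<dots> = ?m powr q" by simp
  finally show ?thesis .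
qed

lemma cmod_powr_conv:
  fixes z :: complex and p :: real
  shows "cmod z powr p = \<bar>(Re z)^2 + (Im z)^2\<bar> powr (p/2)"
proof -
  have "\<bar>(Re z)^2 + (Im z)^2\<bar> = (cmod z) powr 2" by (simp add: cmod_power2)
  then have "\<bar>(Re z)^2 + (Im z)^2\<bar> powr (p/2) = cmod z powr (2 * (p/2))" by (simp only: powr_powr)
  then show ?thesis by simp
qed



theorem proposition2p4:
  fixes Ed :: "('v::finite \<times> 'v) set"
  assumes "simple_oriented_graph Ed"
    and "connected_graph Ed"
  shows "\<exists>p::real. 2 < p \<and>
    (\<forall>t::real. \<forall>f :: 'v \<Rightarrow> complex. t \<ge> 0 \<longrightarrow>
       lp_norm p (mat_apply (mat_exp (mat_scale (- t) (mat_mult (laplacian Ed) (laplacian Ed)))) f)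
         \<le> lp_norm p f)"
proof -
  let ?L = "laplacian Ed"
  let ?A = "mat_mult (laplacian Ed) (laplacian Ed)"
  define C where "C = real CARD('v) * (real (card {(x,y). adjacent Ed x y}))^2"
  define M2 where "M2 = (\<Sum>v\<in>UNIV. \<Sum>u\<in>UNIV. (laplacian Ed v u)^2)"
  define q where "q = 1 / (1 + sqrt (M2 * C^2))"
  have M0: "0 \<le> M2" unfolding M2_def by (simp add: sum_nonneg)
  have S0: "0 \<le> sqrt (M2 * C^2)" using M0 by simp
  have S1: "0 < 1 + sqrt (M2 * C^2)" using S0 by linarith
  have q0: "0 < q" unfolding q_def using S1 by simp
  have qS: "q * sqrt (M2 * C^2) \<le> 1" unfolding q_def using S1 by (simp add: pos_divide_le_eq)
  have core': "0 \<le> ip (mat_apply ?L (\<lambda>v. complex_of_real (cmod (g v) powr q) * g v)) (mat_apply ?L g)" for g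
    using core[OF assms q0 qS[unfolded C_def M2_def]] unfolding C_def M2_def .
  define p where "p = 2 + q"
  have p2: "2 < p" using q0 by (simp add: p_def)
  have main: "lp_norm p (mat_apply (mat_exp (mat_scale (- t) ?A)) f) \<le> lp_norm p f"
    if t0: "0 \<le> t" for t :: real and f :: "'v \<Rightarrow> complex"
  proof -
    define E where "E = (\<lambda>s::real. mat_exp (mat_scale (- s) ?A))"
    define X where "X = (\<lambda>s v. \<Sum>j\<in>UNIV. E s v j * Re (f j))"
    define Y where "Y = (\<lambda>s v. \<Sum>j\<in>UNIV. E s v j * Im (f j))"
    define W where "W = (\<lambda>s v. (X s v)^2 + (Y s v)^2)"
    define \<Phi> where "\<Phi> = (\<lambda>s. \<Sum>v\<in>UNIV. \<bar>W s v\<bar> powr (p/2))"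
    have Gre: "Re (mat_apply (E s) f v) = X s v" for s v by (simp add: Re_mat_apply X_def)
    have Gim: "Im (mat_apply (E s) f v) = Y s v" for s v by (simp add: Im_mat_apply Y_def)
    have lp: "lp_norm p (mat_apply (E s) f) = \<Phi> s powr (1/p)" for s
      unfolding lp_norm_def \<Phi>_def W_def by (simp add: cmod_powr_conv Gre Gim)
    have E0: "mat_apply (E 0) f = f"
    proof -
      have "E 0 = mat_id" unfolding E_def by (rule ext, rule ext, rule mat_exp_zero)
      then show ?thesis by (simp add: mat_apply_id)
    qed
    have Xd: "((\<lambda>s. X s v) has_real_derivative - (\<Sum>k\<in>UNIV. ?A v k * X x k)) (at x)" for x v
      unfolding X_def E_def by (rule comp_deriv)
    have Yd: "((\<lambda>s. Y s v) has_real_derivative - (\<Sum>k\<in>UNIV. ?A v k * Y x k)) (at x)" for x v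
      unfolding Y_def E_def by (rule comp_deriv)
    define W' where "W' = (\<lambda>x v. 2 * X x v * - (\<Sum>k\<in>UNIV. ?A v k * X x k)
        + 2 * Y x v * - (\<Sum>k\<in>UNIV. ?A v k * Y x k))"
    have Wd: "((\<lambda>s. W s v) has_real_derivative W' x v) (at x)" for x v
    proof -
      have "(\<lambda>s. W s v) = (\<lambda>s. X s v * X s v + Y s v * Y s v)"
        by (simp add: W_def power2_eq_square)
      moreover have "((\<lambda>s. X s v * X s v + Y s v * Y s v) has_real_derivative W' x v) (at x)"
        unfolding W'_def
        by (rule DERIV_cong[OF DERIV_add[OF DERIV_mult[OF Xd Xd] DERIV_mult[OF Yd Yd]]])
           (simp add: algebra_simps)
      ultimately show ?thesis by simp
    qed
    have r1: "1 < p / 2" using p2 by simp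
    have \<Phi>d: "(\<Phi> has_real_derivative
        (\<Sum>v\<in>UNIV. (p/2) * W x v * \<bar>W x v\<bar> powr (p/2 - 2) * W' x v)) (at x)" for x
      unfolding \<Phi>_def by (intro DERIV_sum DERIV_chain2[OF absp_deriv[OF r1] Wd])
    have Dnp: "(\<Sum>v\<in>UNIV. (p/2) * W x v * \<bar>W x v\<bar> powr (p/2 - 2) * W' x v) \<le> 0" for x
    proof -
      define G where "G = mat_apply (E x) f"
      have cc: "W x v * \<bar>W x v\<bar> powr (p/2 - 2) = cmod (G v) powr q" for v
      proof -
        have e1: "W x v = (cmod (G v))^2" by (simp add: W_def cmod_power2 G_def Gre Gim)
        have e2: "p/2 - 2 = q/2 - 1" by (simp add: p_def)
        show ?thesis unfolding e1 e2 by (rule cmod_pow_conv[OF q0])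
      qed
      have re: "Re (mat_apply ?A G v * cnj (G v)) =
          (\<Sum>k\<in>UNIV. ?A v k * X x k) * X x v + (\<Sum>k\<in>UNIV. ?A v k * Y x k) * Y x v" for v
      proof -
        have a1: "Re (mat_apply ?A G v) = (\<Sum>k\<in>UNIV. ?A v k * X x k)"
          by (simp only: Re_mat_apply[of ?A] G_def Gre)
        have a2: "Im (mat_apply ?A G v) = (\<Sum>k\<in>UNIV. ?A v k * Y x k)"
          by (simp only: Im_mat_apply[of ?A] G_def Gim)
        have a3: "Re (G v) = X x v" "Im (G v) = Y x v" unfolding G_def by (rule Gre, rule Gim)
        show ?thesis by (simp add: a1 a2 a3)
      qed
      have "(\<Sum>v\<in>UNIV. (p/2) * W x v * \<bar>W x v\<bar> powr (p/2 - 2) * W' x v)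
          = (\<Sum>v\<in>UNIV. - p * (cmod (G v) powr q * Re (mat_apply ?A G v * cnj (G v))))"
      proof (rule sum.cong[OF refl])
        fix v
        have "(p/2) * W x v * \<bar>W x v\<bar> powr (p/2 - 2) * W' x v = (p/2) * (cmod (G v) powr q) * W' x v"
          using cc[of v] by (simp add: mult.assoc)
        also have "\<dots> = - p * (cmod (G v) powr q * Re (mat_apply ?A G v * cnj (G v)))"
          unfolding re W'_def by (simp add: algebra_simps)
        finally show "(p/2) * W x v * \<bar>W x v\<bar> powr (p/2 - 2) * W' x v
            = - p * (cmod (G v) powr q * Re (mat_apply ?A G v * cnj (G v)))" .
      qed
      also have "\<dots> = - p * (\<Sum>v\<in>UNIV. cmod (G v) powr q * Re (mat_apply ?A G v * cnj (G v)))"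
        by (simp add: sum_distrib_left)
      also have "\<dots> = - p * ip (mat_apply ?L (\<lambda>v. complex_of_real (cmod (G v) powr q) * G v)) (mat_apply ?L G)"
        by (subst ip_identity) (auto intro: lap_sym)
      also have "\<dots> \<le> 0" using core'[of G] p2 by (simp add: mult_nonneg_nonneg)
      finally show ?thesis .
    qed
    have "\<Phi> t \<le> \<Phi> 0"
      by (rule DERIV_nonpos_imp_nonincreasing[OF t0]) (use \<Phi>d Dnp in blast)
    then have "\<Phi> t powr (1/p) \<le> \<Phi> 0 powr (1/p)"
      using p2 by (intro powr_mono2) (auto simp: \<Phi>_def sum_nonneg)
    then show ?thesis using lp[of t] lp[of 0] E0 unfolding E_def by simp
  qed
  show ?thesis using p2 main by blast
qed

end
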